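(* Let $K\ge2$, $a\ge0$ and $b>aK$. Let $\mathbf v=(-a+b,-b,0,\dots,0)'\in\mathbb{R}^K$ and $v(t)=t\mathbf v$, $t\ge0$. Then the solution of the Skorokhod problem for $v$ with respect to the matrix $\mathscr R$ satisfies $\Gamma_2(v)(t)=t\mathbf v_1$ for all $t\ge0$, where $\mathbf v_1=(b/K-a,0,\dots,0)'$.
   Context: $\mathscr R$ is the $K\times K$ matrix with $\mathscr R_{ii}=1$ for all $i$, $\mathscr R_{i,i+1}=-1/2$ for $i\le K-1$, $\mathscr R_{2,1}=-1$, $\mathscr R_{i,i-1}=-1/2$ for $3\le i\le K$, and all other entries $0$. For a right-continuous-with-left-limits path $x:[0,\infty)\to\mathbb{R}^K$ with $x(0)\ge0$, the Skorokhod problem for $x$ with respect to $\mathscr R$ has a unique solution $(\eta,y)$ of $\mathbb{R}_+^K$-valued paths such that $y(t)=x(t)+\mathscr R\eta(t)$ for all $t$, and for each $i$: $\eta_i(0)=0$, $\eta_i$ is nondecreasing, and $\int_0^\infty y_i(t)d\eta_i(t)=0$. Write $\Gamma(x)=(\Gamma_1(x),\Gamma_2(x))=(\eta,y)$. *)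

theory Defs
  imports "HOL-Analysis.Analysis"
begin

text \<open>Paths with values in R^K are represented as functions  real => nat => real,
  components indexed by 1..K.  Convention: a path is only relevant for t >= 0 and
  indices in 1..K; the solution paths of the Skorokhod problem are normalised to be 0
  for t < 0 and for indices outside 1..K (so that the solution is unique as an object).\<close>

definition Rmat :: "nat \<Rightarrow> nat \<Rightarrow> nat \<Rightarrow> real" where
  "Rmat K i j =
     (if i = j then 1
      else if j = i + 1 \<and> i \<le> K - 1 then - 1 / 2
      else if i = 2 \<and> j = 1 then - 1
      else if 3 \<le> i \<and> i \<le> K \<and> j + 1 = i then - 1 / 2
      else 0)"

text \<open>The integral of y_i against d eta_i over [0,oo) is the Lebesgue--Stieltjes integral
  (eta_i is nondecreasing and right-continuous, extended by 0 to t < 0, so there is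
  no atom at 0 since eta_i(0) = 0).\<close>

definition SP_sol :: "nat \<Rightarrow> (real \<Rightarrow> nat \<Rightarrow> real) \<Rightarrow> (real \<Rightarrow> nat \<Rightarrow> real)
                       \<Rightarrow> (real \<Rightarrow> nat \<Rightarrow> real) \<Rightarrow> bool" where
  "SP_sol K x eta y \<longleftrightarrow>
     (\<forall>t i. (t < 0 \<or> i \<notin> {1..K}) \<longrightarrow> eta t i = 0 \<and> y t i = 0) \<and>
     (\<forall>t \<ge> 0. \<forall>i \<in> {1..K}. y t i = x t i + (\<Sum>j = 1..K. Rmat K i j * eta t j)) \<and>
     (\<forall>t \<ge> 0. \<forall>i \<in> {1..K}. 0 \<le> y t i \<and> 0 \<le> eta t i) \<and>
     (\<forall>i \<in> {1..K}. eta 0 i = 0) \<and>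
     (\<forall>i \<in> {1..K}. mono (\<lambda>t. eta t i)) \<and>
     (\<forall>i \<in> {1..K}. \<forall>t. continuous (at_right t) (\<lambda>s. eta s i)) \<and>
     (\<forall>i \<in> {1..K}.
        (\<integral>\<^sup>+ t. ennreal (y t i) * indicator {0..} t \<partial>interval_measure (\<lambda>s. eta s i)) = 0)"

definition Gamma :: "nat \<Rightarrow> (real \<Rightarrow> nat \<Rightarrow> real)
                       \<Rightarrow> (real \<Rightarrow> nat \<Rightarrow> real) \<times> (real \<Rightarrow> nat \<Rightarrow> real)" where
  "Gamma K x = (THE p. SP_sol K x (fst p) (snd p))"

definition Gamma1 where "Gamma1 K x = fst (Gamma K x)"
definition Gamma2 where "Gamma2 K x = snd (Gamma K x)"

end

theory Submission
  imports Defs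
begin


lemma null_pos_set:
  fixes F f :: "real \<Rightarrow> real"
  assumes fm: "f \<in> borel_measurable borel"
    and I: "(\<integral>\<^sup>+ t. ennreal (f t) * indicator {0..} t \<partial>interval_measure F) = 0"
    and N: "N \<in> sets borel" "\<And>t. t \<in> N \<Longrightarrow> 0 \<le> t \<and> 0 < f t"
  shows "emeasure (interval_measure F) N = 0"
proof -
  have "(\<lambda>t. ennreal (f t) * indicator {0..} t) \<in> borel_measurable borel"
    using fm by measurable
  hence "(\<lambda>t. ennreal (f t) * indicator {0..} t) \<in> borel_measurable (interval_measure F)"
    by (simp only: measurable_cong_sets[OF sets_interval_measure refl])
  hence "AE t in interval_measure F. ennreal (f t) * indicator {0..} t = 0"
    using I by (simp only: nn_integral_0_iff_AE)
  hence "AE t in interval_measure F. t \<notin> N"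
  proof (rule eventually_mono)
    fix t assume "ennreal (f t) * indicator {0..} t = 0"
    thus "t \<notin> N" using N(2)[of t] by (auto simp: indicator_def)
  qed
  moreover have "{x \<in> space (interval_measure F). \<not> x \<notin> N} = N" by simp
  ultimately show ?thesis using AE_iff_measurable[of N "interval_measure F" "\<lambda>x. x \<notin> N"] N(1)
    by simp
qed

lemma flat1:
  fixes F f :: "real \<Rightarrow> real"
  assumes mono: "mono F" and rc: "\<And>a. continuous (at_right a) F"
    and fm: "f \<in> borel_measurable borel"
    and I: "(\<integral>\<^sup>+ t. ennreal (f t) * indicator {0..} t \<partial>interval_measure F) = 0"
    and s: "0 \<le> s0" "s0 \<le> u" and pos: "\<And>v. v \<in> {s0<..u} \<Longrightarrow> 0 < f v"
  shows "F u = F s0"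
proof -
  have "emeasure (interval_measure F) {s0<..u} = 0"
    by (rule null_pos_set[OF fm I]) (use s pos in auto)
  moreover have "emeasure (interval_measure F) {s0<..u} = F u - F s0"
    using s mono rc by (intro emeasure_interval_measure_Ioc) (auto simp: mono_def)
  ultimately have "ennreal (F u - F s0) = 0" by simp
  hence "F u - F s0 \<le> 0" by (simp add: ennreal_eq_0_iff)
  moreover have "F s0 \<le> F u" using mono s by (auto simp: mono_def)
  ultimately show ?thesis by simp
qed

lemma flat2:
  fixes F f :: "real \<Rightarrow> real"
  assumes mono: "mono F" and rc: "\<And>a. continuous (at_right a) F"
    and fm: "f \<in> borel_measurable borel"
    and I: "(\<integral>\<^sup>+ t. ennreal (f t) * indicator {0..} t \<partial>interval_measure F) = 0"
    and s: "0 \<le> s0" "0 < f s0" and e: "0 < e"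
  shows "\<exists>s<s0. F s0 - F s < e"
proof -
  define A where "A n = {s0 - 1 / real (Suc n) <.. s0}" for n
  have z: "emeasure (interval_measure F) {s0} = 0"
    by (rule null_pos_set[OF fm I]) (use s in auto)
  have dec: "decseq A"
    unfolding decseq_def A_def
  proof (intro allI impI subsetI)
    fix m n :: nat and x assume mn: "m \<le> n" and x: "x \<in> {s0 - 1 / real (Suc n)<..s0}"
    have "1 / real (Suc n) \<le> 1 / real (Suc m)" using mn by (intro divide_left_mono) auto
    with x show "x \<in> {s0 - 1 / real (Suc m)<..s0}" by auto
  qed
  have inter: "(\<Inter>n. A n) = {s0}"
  proof
    show "{s0} \<subseteq> (\<Inter>n. A n)" by (auto simp: A_def)
    show "(\<Inter>n. A n) \<subseteq> {s0}"
    proof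
      fix x assume x: "x \<in> (\<Inter>n. A n)"
      hence le: "x \<le> s0" by (auto simp: A_def)
      show "x \<in> {s0}"
      proof (rule ccontr)
        assume "x \<notin> {s0}"
        hence "0 < s0 - x" using le by auto
        then obtain n where "inverse (real (Suc n)) < s0 - x" using reals_Archimedean by blast
        moreover have "x \<in> A n" using x by auto
        ultimately show False by (auto simp: A_def field_simps)
      qed
    qed
  qed
  have meas: "\<And>n. emeasure (interval_measure F) (A n) = ennreal (F s0 - F (s0 - 1 / real (Suc n)))"
    unfolding A_def using mono rc
    by (intro emeasure_interval_measure_Ioc) (auto simp: mono_def)
  have "(INF n. emeasure (interval_measure F) (A n)) = emeasure (interval_measure F) (\<Inter>n. A n)"
  proof (rule INF_emeasure_decseq'[OF _ dec])
    show "\<And>i. A i \<in> sets (interval_measure F)" by (simp add: A_def)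
    show "\<exists>i. emeasure (interval_measure F) (A i) \<noteq> \<infinity>" using meas by auto
  qed
  hence "(INF n. emeasure (interval_measure F) (A n)) < ennreal e" using z inter e by simp
  then obtain n where "emeasure (interval_measure F) (A n) < ennreal e" by (auto simp: INF_less_iff)
  hence "ennreal (F s0 - F (s0 - 1 / real (Suc n))) < ennreal e" using meas by simp
  hence "F s0 - F (s0 - 1 / real (Suc n)) < e" using e
    by (cases "0 \<le> F s0 - F (s0 - 1 / real (Suc n))") (auto simp: ennreal_less_iff)
  moreover have "s0 - 1 / real (Suc n) < s0" by simp
  ultimately show ?thesis by blast
qed



lemma oneD:
  fixes et et' z z' :: "real \<Rightarrow> real" and t m :: real
  assumes mono: "mono et" "mono et'" and e0: "et 0 = 0" "et' 0 = 0" and t: "0 \<le> t" and m: "0 \<le> m"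
    and zz: "\<And>s. 0 \<le> s \<Longrightarrow> s \<le> t \<Longrightarrow> - m \<le> z s - z' s"
    and ynn: "\<And>s. 0 \<le> s \<Longrightarrow> 0 \<le> z' s + et' s"
    and fl1: "\<And>s0 u. 0 \<le> s0 \<Longrightarrow> s0 \<le> u \<Longrightarrow> (\<And>v. v \<in> {s0<..u} \<Longrightarrow> 0 < z v + et v) \<Longrightarrow> et u = et s0"
    and fl2: "\<And>s0 e. 0 \<le> s0 \<Longrightarrow> 0 < z s0 + et s0 \<Longrightarrow> 0 < e \<Longrightarrow> \<exists>s<s0. et s0 - et s < e"
  shows "et t - et' t \<le> m"
proof -
  define S where "S = {s. 0 \<le> s \<and> s \<le> t \<and> et s - et' s \<le> m}"
  have 0: "0 \<in> S" using e0 t m by (simp add: S_def)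
  have bdd: "bdd_above S" by (auto simp: S_def bdd_above_def)
  define s0 where "s0 = Sup S"
  have s0a: "0 \<le> s0" unfolding s0_def using 0 bdd by (rule cSup_upper)
  have s0b: "s0 \<le> t" unfolding s0_def using 0 by (intro cSup_least) (auto simp: S_def)
  have pos: "0 < z v + et v" if v: "v \<in> {s0<..t}" for v
  proof -
    have "v \<notin> S" using v bdd cSup_upper s0_def by fastforce
    hence "et v - et' v > m" using v s0a by (auto simp: S_def)
    moreover have "- m \<le> z v - z' v" using v s0a by (intro zz) auto
    moreover have "0 \<le> z' v + et' v" using v s0a by (intro ynn) auto
    ultimately show ?thesis by linarith
  qed
  have inS: "s0 \<in> S"
  proof (rule ccontr)
    assume nS: "s0 \<notin> S"
    hence gt: "et s0 - et' s0 > m" using s0a s0b by (auto simp: S_def)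
    moreover have "- m \<le> z s0 - z' s0" using s0a s0b by (intro zz) auto
    moreover have "0 \<le> z' s0 + et' s0" using s0a by (intro ynn) auto
    ultimately have "0 < z s0 + et s0" by linarith
    then obtain s where s: "s < s0" "et s0 - et s < et s0 - et' s0 - m"
      using fl2[OF s0a, of "et s0 - et' s0 - m"] gt by auto
    then obtain s' where s': "s' \<in> S" "s < s'" using less_cSup_iff[of S s] 0 bdd s0_def by auto
    have "s' \<le> s0" using s' bdd cSup_upper s0_def by blast
    hence "et' s' \<le> et' s0" "et s \<le> et s'" using mono s' by (auto simp: mono_def)
    moreover have "et s' - et' s' \<le> m" using s' by (auto simp: S_def)
    ultimately show False using s by linarith
  qed
  have "et t = et s0" by (rule fl1[OF s0a s0b pos])
  moreover have "et' s0 \<le> et' t" using mono s0b by (auto simp: mono_def)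
  ultimately show ?thesis using inS by (auto simp: S_def)
qed

lemma sum_single:
  "(\<Sum>j\<in>A. (if j = c \<and> P then a else 0) * (f j :: real)) = (if c \<in> A \<and> P then a * f c else 0)"
  if "finite A"
proof -
  have "(\<Sum>j\<in>A. (if j = c \<and> P then a else 0) * (f j :: real)) = (\<Sum>j\<in>A. if j = c then (if P then a * f c else 0) else 0)"
    by (rule sum.cong) auto
  also have "\<dots> = (if c \<in> A \<and> P then a * f c else 0)" using that by (simp add: sum.delta)
  finally show ?thesis .
qed

lemma Rrow:
  assumes i: "i \<in> {1..K}"
  shows "(\<Sum>j=1..K. Rmat K i j * f j) = f i - (if i + 1 \<le> K then f (i+1) / 2 else 0)
           - (if i = 2 then f 1 else 0) - (if 3 \<le> i then f (i - 1) / 2 else 0)"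
proof -
  have R: "Rmat K i j = (if j = i \<and> True then 1 else 0) + (if j = i + 1 \<and> i + 1 \<le> K then - 1 / 2 else 0)
      + (if j = 1 \<and> i = 2 then - 1 else 0) + (if j = i - 1 \<and> 3 \<le> i then - 1 / 2 else 0)" for j
    using i unfolding Rmat_def by auto
  have "(\<Sum>j=1..K. Rmat K i j * f j) =
       (\<Sum>j=1..K. (if j = i \<and> True then 1 else 0) * f j) + (\<Sum>j=1..K. (if j = i + 1 \<and> i + 1 \<le> K then - 1 / 2 else 0) * f j)
      + (\<Sum>j=1..K. (if j = 1 \<and> i = 2 then - 1 else 0) * f j) + (\<Sum>j=1..K. (if j = i - 1 \<and> 3 \<le> i then - 1 / 2 else 0) * f j)"
    unfolding R by (simp add: algebra_simps sum.distrib)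
  also have "\<dots> = f i - (if i + 1 \<le> K then f (i+1) / 2 else 0)
           - (if i = 2 then f 1 else 0) - (if 3 \<le> i then f (i - 1) / 2 else 0)"
    unfolding sum_single[OF finite_atLeastAtMost] using i by auto
  finally show ?thesis .
qed



definition Qf :: "nat \<Rightarrow> (nat \<Rightarrow> real) \<Rightarrow> nat \<Rightarrow> real" where
  "Qf K f i = (if i + 1 \<le> K then f (i+1) / 2 else 0) + (if i = 2 then f 1 else 0) + (if 3 \<le> i then f (i - 1) / 2 else 0)"

lemma Rrow_Q: "i \<in> {1..K} \<Longrightarrow> (\<Sum>j=1..K. Rmat K i j * f j) = f i - Qf K f i"
  unfolding Qf_def by (subst Rrow[of i K f]) (simp_all add: algebra_simps)

lemma chain:
  fixes D :: "nat \<Rightarrow> real"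
  assumes K: "2 \<le> K" and D: "\<And>i. i \<in> {1..K} \<Longrightarrow> 0 \<le> D i \<and> D i \<le> Qf K D i"
  shows "\<And>i. i \<in> {1..K} \<Longrightarrow> D i = 0"
proof -
  have Di: "D i \<le> Qf K D i" "0 \<le> D i" if "1 \<le> i" "i \<le> K" for i using D that by auto
  have h1: "D 1 \<le> D 2 / 2" using Di(1)[of 1] K by (simp add: Qf_def numeral_2_eq_2)
  have up: "n + 2 \<le> K - 1 \<longrightarrow> D (n+2) \<le> D (n+3)" for n
  proof (induction n)
    case 0
    show ?case
    proof
      assume "0 + 2 \<le> K - 1"
      hence "3 \<le> K" by simp
      hence "D 2 \<le> D 3 / 2 + D 1" using Di(1)[of 2] by (simp add: Qf_def)
      with h1 have "D 2 \<le> D 3" by linarith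
      thus "D (0+2) \<le> D (0+3)" by (simp add: numeral_2_eq_2)
    qed
  next
    case (Suc n)
    show ?case
    proof
      assume a: "Suc n + 2 \<le> K - 1"
      hence "n + 4 \<le> K" by simp
      hence "D (n+3) \<le> D (n+4) / 2 + D (n+2) / 2" using Di(1)[of "n+3"]
        by (simp add: Qf_def eval_nat_numeral)
      moreover have "D (n+2) \<le> D (n+3)" using Suc a by simp
      ultimately show "D (Suc n + 2) \<le> D (Suc n + 3)" by (simp add: eval_nat_numeral)
    qed
  qed
  have toK: "2 + n \<le> K \<longrightarrow> D (K - n) \<le> D K" for n
  proof (induction n)
    case 0 then show ?case by simp
  next
    case (Suc n)
    show ?case
    proof
      assume a: "2 + Suc n \<le> K"
      have "D (K - Suc n) \<le> D (K - n)"
        using up[of "K - Suc n - 2"] a by (simp add: eval_nat_numeral Suc_diff_Suc)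
      thus "D (K - Suc n) \<le> D K" using Suc a by simp
    qed
  qed
  have DK: "D K \<le> 0"
  proof (cases "K = 2")
    case True
    then show ?thesis using Di(1)[of 2] h1 by (simp add: Qf_def)
  next
    case False
    hence "D K \<le> D (K - 1) / 2" using Di(1)[of K] K by (simp add: Qf_def)
    moreover have "D (K - 1) \<le> D K" using toK[of 1] False K by simp
    ultimately show ?thesis by simp
  qed
  have ge2: "D i \<le> 0" if "2 \<le> i" "i \<le> K" for i
  proof -
    have "2 + (K - i) \<le> K" using that by simp
    hence "D (K - (K - i)) \<le> D K" using toK[of "K - i"] by blast
    thus ?thesis using that DK by simp
  qed
  fix i assume i: "i \<in> {1..K}"
  show "D i = 0"
  proof (cases "i = 1")
    case True
    then show ?thesis using h1 ge2[of 2] K Di(2)[of 1] by simp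
  next
    case False
    then show ?thesis using ge2[of i] i Di(2)[of i] by simp
  qed
qed



lemma SP_solD:
  assumes "SP_sol K x e y"
  shows "\<And>t i. t < 0 \<or> i \<notin> {1..K} \<Longrightarrow> e t i = 0"
    and "\<And>t i. t < 0 \<or> i \<notin> {1..K} \<Longrightarrow> y t i = 0"
    and "\<And>t i. 0 \<le> t \<Longrightarrow> i \<in> {1..K} \<Longrightarrow> y t i = x t i + (\<Sum>j = 1..K. Rmat K i j * e t j)"
    and "\<And>t i. 0 \<le> t \<Longrightarrow> i \<in> {1..K} \<Longrightarrow> 0 \<le> y t i"
    and "\<And>t i. 0 \<le> t \<Longrightarrow> i \<in> {1..K} \<Longrightarrow> 0 \<le> e t i"
    and "\<And>i. i \<in> {1..K} \<Longrightarrow> e 0 i = 0"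
    and "\<And>i. i \<in> {1..K} \<Longrightarrow> mono (\<lambda>t. e t i)"
    and "\<And>i t. i \<in> {1..K} \<Longrightarrow> continuous (at_right t) (\<lambda>s. e s i)"
    and "\<And>i. i \<in> {1..K} \<Longrightarrow>
        (\<integral>\<^sup>+ t. ennreal (y t i) * indicator {0..} t \<partial>interval_measure (\<lambda>s. e s i)) = 0"
  using assms unfolding SP_sol_def by blast+

lemma e_meas:
  assumes "SP_sol K x e y"
  shows "(\<lambda>t. e t j) \<in> borel_measurable borel"
proof (cases "j \<in> {1..K}")
  case True
  show ?thesis by (rule borel_measurable_mono[OF SP_solD(7)[OF assms True]])
next
  case False
  hence "(\<lambda>t. e t j) = (\<lambda>t. 0)" using SP_solD(1)[OF assms] by auto
  then show ?thesis by simp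
qed

lemma e_bound:
  assumes S1: "SP_sol K x e y" and S2: "SP_sol K x e' y'" and s: "0 \<le> s" "s \<le> T"
  shows "\<bar>e s j - e' s j\<bar> \<le> \<bar>e T j\<bar> + \<bar>e' T j\<bar>"
proof (cases "j \<in> {1..K}")
  case True
  have "0 \<le> e s j" "0 \<le> e' s j" using SP_solD(5)[OF S1] SP_solD(5)[OF S2] s True by auto
  moreover have "e s j \<le> e T j" "e' s j \<le> e' T j"
    using SP_solD(7)[OF S1 True] SP_solD(7)[OF S2 True] s by (auto simp: mono_def)
  ultimately show ?thesis by linarith
next
  case False
  then show ?thesis using SP_solD(1)[OF S1] SP_solD(1)[OF S2] by simp
qed

lemma half:
  assumes xm: "\<And>i. (\<lambda>t. x t i) \<in> borel_measurable borel"
    and S1: "SP_sol K x e y" and S2: "SP_sol K x e' y'"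
    and i: "i \<in> {1..K}" and t: "0 \<le> t" "t \<le> T"
  shows "e t i - e' t i \<le> Qf K (\<lambda>j. Sup ((\<lambda>s. \<bar>e s j - e' s j\<bar>) ` {0..T})) i"
proof -
  define D where "D j = Sup ((\<lambda>s. \<bar>e s j - e' s j\<bar>) ` {0..T})" for j
  have bd: "\<bar>e s j - e' s j\<bar> \<le> D j" if "0 \<le> s" "s \<le> T" for s j
    unfolding D_def
  proof (rule cSup_upper)
    show "\<bar>e s j - e' s j\<bar> \<in> (\<lambda>s. \<bar>e s j - e' s j\<bar>) ` {0..T}" using that by auto
    show "bdd_above ((\<lambda>s. \<bar>e s j - e' s j\<bar>) ` {0..T})"
      using e_bound[OF S1 S2] by (intro bdd_aboveI[of _ "\<bar>e T j\<bar> + \<bar>e' T j\<bar>"]) auto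
  qed
  have D0: "0 \<le> D j" for j using bd[of 0 j] t by linarith
  have [measurable]: "(\<lambda>t. e t j) \<in> borel_measurable borel" for j using e_meas[OF S1] .
  have [measurable]: "(\<lambda>t. x t j) \<in> borel_measurable borel" for j using xm .
  define z where "z s = x s i - Qf K (e s) i" for s
  define z' where "z' s = x s i - Qf K (e' s) i" for s
  have y1: "y s i = z s + e s i" if "0 \<le> s" for s
    using SP_solD(3)[OF S1 that i] Rrow_Q[OF i] by (simp add: z_def)
  have y2: "y' s i = z' s + e' s i" if "0 \<le> s" for s
    using SP_solD(3)[OF S2 that i] Rrow_Q[OF i] by (simp add: z'_def)
  have fm: "(\<lambda>s. z s + e s i) \<in> borel_measurable borel"
    unfolding z_def Qf_def by measurable
  have I: "(\<integral>\<^sup>+ s. ennreal (z s + e s i) * indicator {0..} s \<partial>interval_measure (\<lambda>s. e s i)) = 0"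
  proof -
    have "(\<integral>\<^sup>+ s. ennreal (z s + e s i) * indicator {0..} s \<partial>interval_measure (\<lambda>s. e s i))
        = (\<integral>\<^sup>+ s. ennreal (y s i) * indicator {0..} s \<partial>interval_measure (\<lambda>s. e s i))"
      by (rule nn_integral_cong) (auto simp: y1 indicator_def)
    also have "\<dots> = 0" using SP_solD(9)[OF S1 i] .
    finally show ?thesis .
  qed
  note mono1 = SP_solD(7)[OF S1 i] and rc1 = SP_solD(8)[OF S1 i]
  have Df: "(\<lambda>j. Sup ((\<lambda>s. \<bar>e s j - e' s j\<bar>) ` {0..T})) = D"
    by (rule ext) (simp add: D_def)
  show ?thesis unfolding Df
  proof (rule oneD[where z = z and z' = z' and et = "\<lambda>s. e s i" and et' = "\<lambda>s. e' s i" and t = t and m = "Qf K D i"])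
    show "mono (\<lambda>t. e t i)" by (rule mono1)
    show "mono (\<lambda>t. e' t i)" by (rule SP_solD(7)[OF S2 i])
    show "e 0 i = 0" by (rule SP_solD(6)[OF S1 i])
    show "e' 0 i = 0" by (rule SP_solD(6)[OF S2 i])
    show "0 \<le> t" by (rule t(1))
    show "0 \<le> Qf K D i" unfolding Qf_def using D0 by simp
    show "- Qf K D i \<le> z s - z' s" if "0 \<le> s" "s \<le> t" for s
    proof -
      have h: "- D j \<le> e' s j - e s j" for j using bd[of s j] that t by linarith
      show ?thesis unfolding z_def z'_def Qf_def
        using h[of "i+1"] h[of 1] h[of "i-1"] by (auto split: if_splits)
    qed
    show "0 \<le> z' s + e' s i" if "0 \<le> s" for s
      using y2[OF that] SP_solD(4)[OF S2 that i] by simp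
    show "e u i = e s0 i" if "0 \<le> s0" "s0 \<le> u" "\<And>v. v \<in> {s0<..u} \<Longrightarrow> 0 < z v + e v i" for s0 u
      by (rule flat1[OF mono1 rc1 fm I that])
    show "\<exists>s<s0. e s0 i - e s i < ee" if "0 \<le> s0" "0 < z s0 + e s0 i" "0 < ee" for s0 ee
      by (rule flat2[OF mono1 rc1 fm I that])
  qed
qed

lemma SP_unique:
  assumes K: "2 \<le> K" and xm: "\<And>i. (\<lambda>t. x t i) \<in> borel_measurable borel"
    and S1: "SP_sol K x e y" and S2: "SP_sol K x e' y'"
  shows "e = e' \<and> y = y'"
proof -
  have eq: "e T i = e' T i" if T: "0 \<le> T" and i: "i \<in> {1..K}" for T i
  proof -
    define D where "D j = Sup ((\<lambda>s. \<bar>e s j - e' s j\<bar>) ` {0..T})" for j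
    have Df: "D = (\<lambda>j. Sup ((\<lambda>s. \<bar>e s j - e' s j\<bar>) ` {0..T}))"
      by (rule ext) (simp add: D_def)
    have D': "Sup ((\<lambda>s. \<bar>e' s j - e s j\<bar>) ` {0..T}) = D j" for j
      unfolding D_def by (simp add: abs_minus_commute)
    have bd: "\<bar>e s j - e' s j\<bar> \<le> D j" if "0 \<le> s" "s \<le> T" for s j
      unfolding D_def
    proof (rule cSup_upper)
      show "\<bar>e s j - e' s j\<bar> \<in> (\<lambda>s. \<bar>e s j - e' s j\<bar>) ` {0..T}" using that by auto
      show "bdd_above ((\<lambda>s. \<bar>e s j - e' s j\<bar>) ` {0..T})"
        using e_bound[OF S1 S2] by (intro bdd_aboveI[of _ "\<bar>e T j\<bar> + \<bar>e' T j\<bar>"]) auto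
    qed
    have DQ: "0 \<le> D k \<and> D k \<le> Qf K D k" if k: "k \<in> {1..K}" for k
    proof
      show "0 \<le> D k" using bd[of 0 k] T by linarith
      show "D k \<le> Qf K D k" unfolding D_def
      proof (rule cSup_least)
        show "(\<lambda>s. \<bar>e s k - e' s k\<bar>) ` {0..T} \<noteq> {}" using T by auto
        fix r assume "r \<in> (\<lambda>s. \<bar>e s k - e' s k\<bar>) ` {0..T}"
        then obtain s where s: "0 \<le> s" "s \<le> T" and r: "r = \<bar>e s k - e' s k\<bar>" by auto
        have "e s k - e' s k \<le> Qf K D k" using half[OF xm S1 S2 k s] by (simp add: Df)
        moreover have "e' s k - e s k \<le> Qf K D k" using half[OF xm S2 S1 k s] D' by simp
        ultimately show "r \<le> (Qf K (\<lambda>j. Sup ((\<lambda>s. \<bar>e s j - e' s j\<bar>) ` {0..T})) k)"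
          unfolding r D_def[symmetric] by linarith
      qed
    qed
    have "D i = 0" by (rule chain[OF K DQ i])
    thus ?thesis using bd[of T i] T by simp
  qed
  have ee: "e = e'"
  proof (intro ext)
    fix t i
    show "e t i = e' t i"
    proof (cases "t < 0 \<or> i \<notin> {1..K}")
      case True
      then show ?thesis using SP_solD(1)[OF S1] SP_solD(1)[OF S2] by simp
    next
      case False
      then show ?thesis using eq by auto
    qed
  qed
  have "y = y'"
  proof (intro ext)
    fix t i
    show "y t i = y' t i"
    proof (cases "t < 0 \<or> i \<notin> {1..K}")
      case True
      then show ?thesis using SP_solD(2)[OF S1] SP_solD(2)[OF S2] by simp
    next
      case False
      then show ?thesis using SP_solD(3)[OF S1] SP_solD(3)[OF S2] ee by simp
    qed
  qed
  with ee show ?thesis by simp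
qed



definition cc :: "nat \<Rightarrow> real \<Rightarrow> nat \<Rightarrow> real" where
  "cc K b j = (if j = 1 then 0 else 2 * b * (real K - real j + 1) / real K)"

lemma row_check:
  fixes a b t :: real
  assumes K: "2 \<le> K" and i: "i \<in> {1..K}"
  shows "t * (if i = 1 then b / real K - a else 0)
       = t * (if i = 1 then - a + b else if i = 2 then - b else 0) + (t * cc K b i - Qf K (\<lambda>j. t * cc K b j) i)"
proof -
  have Kp: "real K > 0" using K by simp
  consider "i = 1" | "i = 2" | "3 \<le> i" "i + 1 \<le> K" | "3 \<le> i" "i = K" using i by force
  then show ?thesis
  proof cases
    case 1
    then show ?thesis using K Kp by (simp add: Qf_def cc_def field_simps)
  next
    case 2
    show ?thesis
    proof (cases "3 \<le> K")
      case True
      then show ?thesis using 2 Kp by (simp add: Qf_def cc_def field_simps)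
    next
      case False
      hence "K = 2" using K by simp
      then show ?thesis using 2 by (simp add: Qf_def cc_def field_simps)
    qed
  next
    case 3
    have r1: "real (i - 1) = real i - 1" "real (i - Suc 0) = real i - 1" using 3 by auto
    have ne: "i - 1 \<noteq> 1" "i - Suc 0 \<noteq> Suc 0" "i \<noteq> 1" "i \<noteq> 2" using 3 by auto
    show ?thesis using 3 Kp by (simp add: Qf_def cc_def ne r1 field_simps)
  next
    case 4
    have r1: "real (i - 1) = real i - 1" "real (i - Suc 0) = real i - 1" using 4 by auto
    have ne: "i - 1 \<noteq> 1" "i - Suc 0 \<noteq> Suc 0" "i \<noteq> 1" "i \<noteq> 2" using 4 by auto
    show ?thesis using 4 Kp by (simp add: Qf_def cc_def ne r1 field_simps)
  qed
qed

theorem lemma7p1: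
  fixes K :: nat and a b :: real
  assumes "K \<ge> 2" and "a \<ge> 0" and "b > a * real K"
  defines "vv \<equiv> (\<lambda>i::nat. if i = 1 then - a + b else if i = 2 then - b else 0)"
      and "vv1 \<equiv> (\<lambda>i::nat. if i = 1 then b / real K - a else 0)"
  shows "\<forall>t \<ge> 0. \<forall>i \<in> {1..K}. Gamma2 K (\<lambda>t i. t * vv i) t i = t * vv1 i"
proof -
  note K = assms(1)
  have Kp: "real K > 0" using K by simp
  have "a * real K \<ge> 0" using assms(2) by simp
  hence bpos: "b > 0" using assms(3) by linarith
  have v1pos: "b / real K - a > 0" using assms(3) Kp by (simp add: field_simps)
  define x where "x = (\<lambda>t i. t * vv i)"
  define eta where "eta t i = (if t < 0 \<or> i \<notin> {1..K} then 0 else t * cc K b i)" for t i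
  define yv where "yv t i = (if t < 0 \<or> i \<notin> {1..K} then 0 else t * vv1 i)" for t i
  have cc_nn: "0 \<le> cc K b i" if "i \<in> {1..K}" for i
    using that bpos Kp by (auto simp: cc_def intro!: divide_nonneg_pos mult_nonneg_nonneg)
  have etaf: "(\<lambda>s. eta s i) = (\<lambda>s. max 0 s * cc K b i)" if "i \<in> {1..K}" for i
    using that by (auto simp: eta_def max_def)
  have xm: "(\<lambda>t. x t i) \<in> borel_measurable borel" for i unfolding x_def by simp
  have sol: "SP_sol K x eta yv"
    unfolding SP_sol_def
  proof (intro conjI ballI allI impI)
    fix t :: real and i :: nat
    assume "t < 0 \<or> i \<notin> {1..K}"
    thus "eta t i = 0" "yv t i = 0" by (auto simp: eta_def yv_def)
  next
    fix t :: real and i :: nat assume t: "0 \<le> t" and i: "i \<in> {1..K}"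
    have "(\<Sum>j = 1..K. Rmat K i j * eta t j) = (\<Sum>j = 1..K. Rmat K i j * (t * cc K b j))"
      using t by (intro sum.cong) (auto simp: eta_def)
    also have "\<dots> = t * cc K b i - Qf K (\<lambda>j. t * cc K b j) i" by (rule Rrow_Q[OF i])
    finally show "yv t i = x t i + (\<Sum>j = 1..K. Rmat K i j * eta t j)"
      using row_check[OF K i, where t=t and a=a and b=b] t i unfolding yv_def x_def vv_def vv1_def by simp
    show "0 \<le> yv t i" using t v1pos by (auto simp: yv_def vv1_def)
    show "0 \<le> eta t i" using t cc_nn[OF i] by (auto simp: eta_def)
  next
    fix i :: nat assume i: "i \<in> {1..K}"
    show "eta 0 i = 0" by (simp add: eta_def)
    show "mono (\<lambda>t. eta t i)" unfolding etaf[OF i] mono_def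
    proof (intro allI impI)
      fix u v :: real assume "u \<le> v"
      hence "max 0 u \<le> max 0 v" by simp
      thus "max 0 u * cc K b i \<le> max 0 v * cc K b i" using cc_nn[OF i] by (rule mult_right_mono)
    qed
  next
    fix i :: nat and t :: real assume i: "i \<in> {1..K}"
    have "isCont (\<lambda>s. max 0 s * cc K b i) t" by (intro continuous_intros)
    thus "continuous (at_right t) (\<lambda>s. eta s i)" unfolding etaf[OF i]
      using continuous_at_imp_continuous_at_within by blast
  next
    fix i :: nat assume i: "i \<in> {1..K}"
    show "(\<integral>\<^sup>+ t. ennreal (yv t i) * indicator {0..} t \<partial>interval_measure (\<lambda>s. eta s i)) = 0"
    proof (cases "i = 1")
      case True
      have e0: "(\<lambda>s. eta s i) = (\<lambda>s. 0)" using True by (auto simp: eta_def cc_def)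
      have "emeasure (interval_measure (\<lambda>s. 0::real)) (\<Union>n::nat. {- real n<..real n}) = 0"
        by (rule emeasure_UN_eq_0) (auto simp: emeasure_interval_measure_Ioc)
      moreover have "(\<Union>n::nat. {- real n<..real n}) = UNIV"
      proof -
        have "z \<in> (\<Union>n::nat. {- real n<..real n})" for z :: real
        proof -
          obtain n where "\<bar>z\<bar> < real n" using reals_Archimedean2 by blast
          hence "z \<in> {- real n<..real n}" by auto
          thus ?thesis by blast
        qed
        thus ?thesis by blast
      qed
      ultimately have "UNIV \<in> null_sets (interval_measure (\<lambda>s. 0::real))" by (intro null_setsI) auto
      hence "AE t in interval_measure (\<lambda>s. 0::real). ennreal (yv t i) * indicator {0..} t = 0"
        by (rule AE_I') auto
      hence "(\<integral>\<^sup>+ t. ennreal (yv t i) * indicator {0..} t \<partial>interval_measure (\<lambda>s. 0::real)) = (\<integral>\<^sup>+ t. 0 \<partial>interval_measure (\<lambda>s. 0::real))"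
        by (rule nn_integral_cong_AE)
      thus ?thesis unfolding e0 by simp
    next
      case False
      hence "yv t i = 0" for t by (simp add: yv_def vv1_def)
      thus ?thesis by simp
    qed
  qed
  have G: "Gamma K x = (eta, yv)"
    unfolding Gamma_def
  proof (rule the_equality)
    show "SP_sol K x (fst (eta, yv)) (snd (eta, yv))" using sol by simp
    fix p assume "SP_sol K x (fst p) (snd p)"
    hence "fst p = eta \<and> snd p = yv" using SP_unique[OF K xm _ sol] by blast
    thus "p = (eta, yv)" by (simp add: prod_eq_iff)
  qed
  have "Gamma2 K (\<lambda>t i. t * vv i) = yv" using G by (simp add: Gamma2_def x_def)
  thus ?thesis by (simp add: yv_def)
qed

end
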